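(* Let $n\ge 2$ and let $S$ be a set of vertices of the hypercube $Q_n$ such that the induced subgraph $Q_n[S]$ has maximum degree at most one. Then, identifying vertices of $Q_n$ with subsets of $[n]$, the collection $V(Q_n)\setminus S$ is the collection of feasible sets of a delta-matroid with ground set $[n]$.
   Context: The $n$-dimensional hypercube $Q_n$ has vertex set $\{0,1\}^n$, two vertices adjacent if they differ in exactly one coordinate; each vertex is identified with the subset of $[n]=\{1,\dots,n\}$ of which it is the indicator vector. A delta-matroid $(E,\mathcal F)$ consists of a finite ground set $E$ and a non-empty collection $\mathcal F$ of subsets of $E$ (the feasible sets) satisfying the symmetric exchange axiom: for all $X,Y\in\mathcal F$ and every $e\in X\triangle Y$ there exists $f\in X\triangle Y$ (possibly $f=e$) with $X\triangle\{e,f\}\in\mathcal F$. *)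

theory Defs
  imports Main
begin

definition symdiff :: "'a set \<Rightarrow> 'a set \<Rightarrow> 'a set" (infixl "\<triangle>" 70) where
  "A \<triangle> B = (A - B) \<union> (B - A)"

definition delta_matroid :: "'a set \<Rightarrow> 'a set set \<Rightarrow> bool" where
  "delta_matroid E F \<longleftrightarrow> finite E \<and> F \<noteq> {} \<and> (\<forall>X\<in>F. X \<subseteq> E) \<and>
     (\<forall>X\<in>F. \<forall>Y\<in>F. \<forall>e\<in>X \<triangle> Y. \<exists>f\<in>X \<triangle> Y. X \<triangle> {e, f} \<in> F)"

definition hypercube_vertices :: "nat \<Rightarrow> nat set set" where
  "hypercube_vertices n = Pow {1..n}"

definition hypercube_adj :: "nat set \<Rightarrow> nat set \<Rightarrow> bool" where
  "hypercube_adj X Y \<longleftrightarrow> card (X \<triangle> Y) = 1"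

definition induced_degree :: "nat set set \<Rightarrow> nat set \<Rightarrow> nat" where
  "induced_degree S v = card {w \<in> S. hypercube_adj v w}"

end

theory Submission
  imports Defs
begin

lemma sd_cancel: "A \<triangle> (A \<triangle> B) = B" by (auto simp: symdiff_def)
lemma sd_two: "e \<noteq> f \<Longrightarrow> A \<triangle> {e,f} = (A \<triangle> {e}) \<triangle> {f}" by (auto simp: symdiff_def)
lemma sd_adj: "hypercube_adj A (A \<triangle> {f})"
  unfolding hypercube_adj_def by (simp add: sd_cancel)

theorem lemma3p4:
  fixes n :: nat and S :: "nat set set"
  assumes "n \<ge> 2"
    and "S \<subseteq> hypercube_vertices n"
    and "\<forall>v\<in>S. induced_degree S v \<le> 1"
  shows "delta_matroid {1..n} (hypercube_vertices n - S)"
proof -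
  have finS: "finite S" using assms(2) finite_subset unfolding hypercube_vertices_def by blast
  have two: False if v: "v \<in> S" and a: "v \<triangle> {a} \<in> S" and b: "v \<triangle> {b} \<in> S" and ab: "a \<noteq> b" for v a b
  proof -
    have ne: "v \<triangle> {a} \<noteq> v \<triangle> {b}"
    proof
      assume "v \<triangle> {a} = v \<triangle> {b}"
      then have "v \<triangle> (v \<triangle> {a}) = v \<triangle> (v \<triangle> {b})" by simp
      then show False using ab by (simp add: sd_cancel)
    qed
    have sub: "{v \<triangle> {a}, v \<triangle> {b}} \<subseteq> {w \<in> S. hypercube_adj v w}"
      using a b sd_adj by auto
    have "card {v \<triangle> {a}, v \<triangle> {b}} \<le> card {w \<in> S. hypercube_adj v w}"
      by (rule card_mono) (use finS sub in auto)
    then have "2 \<le> induced_degree S v" using ne unfolding induced_degree_def by simp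
    then show False using assms(3) v by fastforce
  qed
  have ne: "hypercube_vertices n - S \<noteq> {}"
  proof
    assume h: "hypercube_vertices n - S = {}"
    have P: "Pow {1..n} \<subseteq> S" using h unfolding hypercube_vertices_def by blast
    have "{1} \<subseteq> {1..n}" "{2} \<subseteq> {1..n}" using assms(1) by auto
    moreover have "{} \<triangle> {1} = {1::nat}" "{} \<triangle> {2} = {2::nat}" by (simp_all add: symdiff_def)
    ultimately have "{} \<in> S" "{} \<triangle> {1} \<in> S" "{} \<triangle> {2} \<in> S" using P by auto
    then show False using two by fastforce
  qed
  have ex: "\<exists>f\<in>X \<triangle> Y. X \<triangle> {e, f} \<in> hypercube_vertices n - S"
    if X: "X \<in> hypercube_vertices n - S" and Y: "Y \<in> hypercube_vertices n - S"
      and e: "e \<in> X \<triangle> Y" for X Y e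
  proof (cases "X \<triangle> {e} \<in> S")
    case False
    have "X \<triangle> {e} \<in> hypercube_vertices n" using X Y e
      unfolding hypercube_vertices_def symdiff_def by blast
    then have "X \<triangle> {e,e} \<in> hypercube_vertices n - S" using False by simp
    then show ?thesis using e by blast
  next
    case True
    have XD: "X \<triangle> (X \<triangle> Y) = Y" by (rule sd_cancel)
    show ?thesis
    proof (cases "\<exists>f\<in>X \<triangle> Y. f \<noteq> e")
      case False
      then have "X \<triangle> Y = {e}" using e by blast
      then have "X \<triangle> {e} = Y" using XD by simp
      then have False using True Y by blast
      then show ?thesis by blast
    next
      case True2: True
      then obtain f where f: "f \<in> X \<triangle> Y" "f \<noteq> e" by blast
      show ?thesis
      proof (cases "\<exists>g\<in>X \<triangle> Y. g \<noteq> e \<and> g \<noteq> f")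
        case False
        then have "X \<triangle> Y = {e,f}" using e f by blast
        then have "X \<triangle> {e,f} = Y" using XD by simp
        then show ?thesis using f Y by blast
      next
        case True
        then obtain g where g: "g \<in> X \<triangle> Y" "g \<noteq> e" "g \<noteq> f" by blast
        have mem: "X \<triangle> {e,h} \<in> hypercube_vertices n" if "h \<in> X \<triangle> Y" for h
          using X Y e that unfolding hypercube_vertices_def symdiff_def by blast
        show ?thesis
        proof (rule ccontr)
          assume "\<not> ?thesis"
          then have "X \<triangle> {e,f} \<in> S" "X \<triangle> {e,g} \<in> S" using mem f g by blast+
          then have "(X \<triangle> {e}) \<triangle> {f} \<in> S" "(X \<triangle> {e}) \<triangle> {g} \<in> S"
            using sd_two f g by metis+
          then show False using two[OF \<open>X \<triangle> {e} \<in> S\<close>] g by blast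
        qed
      qed
    qed
  qed
  show ?thesis unfolding delta_matroid_def
  proof (intro conjI ballI)
    show "finite {1..n}" by simp
    show "hypercube_vertices n - S \<noteq> {}" by (rule ne)
  next
    fix X assume "X \<in> hypercube_vertices n - S"
    then show "X \<subseteq> {1..n}" unfolding hypercube_vertices_def by blast
  next
    fix X Y e assume "X \<in> hypercube_vertices n - S" "Y \<in> hypercube_vertices n - S" "e \<in> X \<triangle> Y"
    then show "\<exists>f\<in>X \<triangle> Y. X \<triangle> {e, f} \<in> hypercube_vertices n - S" by (rule ex)
  qed
qed

end
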